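(* There is a polynomial $p$ such that for all $n,s\ge1$, with $N=2^n$, the polynomial map $\mathcal{G}^{\mathrm{SSSV}}_{n,\lceil\log_2 s\rceil}$ is a $p(\log s,n)$-$\Sigma\Pi\Sigma$-succinct generator for the class of polynomials $F\in\mathbb{F}[X_1,\ldots,X_N]$ having at most $s$ monomials.
   Context: Let $P(z_1,\ldots,z_n,x_1,\ldots,x_n)=\prod_{i=1}^n(z_ix_i+(1-z_i))$, $Q^{\mathrm{SSV}}_{n,k}(y,z,x)=\sum_{j=1}^k y_jP(z_j,x)$ with $z_j=(z_{j,1},\ldots,z_{j,n})$, and $Q^{\mathrm{SSSV}}_{n,k}=Q^{\mathrm{SSV}}_{n,k}+\prod_{i=1}^n(x_i+1)$. $\mathcal{G}^{\mathrm{SSSV}}_{n,k}(y,z)$ is the coefficient vector of $Q^{\mathrm{SSSV}}_{n,k}$ as a multilinear polynomial in $x$, with coordinates indexed by subsets $S\subseteq[n]$ (monomials $x_S=\prod_{i\in S}x_i$) and identified with $X_1,\ldots,X_N$ via $i-1=\sum_{k\in S}2^{k-1}$. A polynomial map $\mathcal{G}:\mathbb{F}^m\to\mathbb{F}^{2^n}$ is an $s'$-$\Sigma\Pi\Sigma$-succinct generator for a class $\mathcal{D}$ of $N$-variate polynomials if (i) for every $\alpha\in\mathbb{F}^m$ the multilinear polynomial $\sum_S\mathcal{G}_S(\alpha)x_S$ is computed by a multilinear depth-3 $\Sigma\Pi\Sigma$ formula of size at most $s'$, and (ii) for every $F\in\mathcal{D}$, $F\not\equiv0$ iff $F\circ\mathcal{G}\not\equiv0$.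 *)

theory Defs
  imports Complex_Main "HOL-Library.Poly_Mapping"
begin

type_synonym 'a mpoly = "(nat \<Rightarrow>\<^sub>0 nat) \<Rightarrow>\<^sub>0 'a"

definition mVar :: "nat \<Rightarrow> ('a::comm_ring_1) mpoly" where
  "mVar i = Poly_Mapping.single (Poly_Mapping.single i 1) 1"

definition mConst :: "'a::comm_ring_1 \<Rightarrow> 'a mpoly" where
  "mConst c = Poly_Mapping.single 0 c"

definition mpoly_vars :: "('a::zero) mpoly \<Rightarrow> nat set" where
  "mpoly_vars p = (\<Union>m\<in>Poly_Mapping.keys p. Poly_Mapping.keys m)"

definition mpoly_eval :: "(nat \<Rightarrow> 'a::comm_ring_1) \<Rightarrow> 'a mpoly \<Rightarrow> 'a" where
  "mpoly_eval f p = (\<Sum>m\<in>Poly_Mapping.keys p. Poly_Mapping.lookup p m * (\<Prod>i\<in>Poly_Mapping.keys m. f i ^ Poly_Mapping.lookup m i))"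

definition mpoly_subst :: "(nat \<Rightarrow> ('a::comm_ring_1) mpoly) \<Rightarrow> 'a mpoly \<Rightarrow> 'a mpoly" where
  "mpoly_subst g p = (\<Sum>m\<in>Poly_Mapping.keys p. mConst (Poly_Mapping.lookup p m) * (\<Prod>i\<in>Poly_Mapping.keys m. g i ^ Poly_Mapping.lookup m i))"

definition mono_of_set :: "nat set \<Rightarrow> (nat \<Rightarrow>\<^sub>0 nat)" where
  "mono_of_set S = (\<Sum>i\<in>S. Poly_Mapping.single i 1)"

text \<open>An affine linear form c + sum_i l_i x_i is a pair (c, l); a Sigma-Pi-Sigma formula is a
list of product gates, each a list of affine forms.\<close>

type_synonym 'a affine = "'a \<times> (nat \<Rightarrow>\<^sub>0 'a)"
type_synonym 'a spsformula = "'a affine list list"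

definition affine_poly :: "('a::comm_ring_1) affine \<Rightarrow> 'a mpoly" where
  "affine_poly a = mConst (fst a) + (\<Sum>i\<in>Poly_Mapping.keys (snd a). mConst (Poly_Mapping.lookup (snd a) i) * mVar i)"

definition sps_poly :: "('a::comm_ring_1) spsformula \<Rightarrow> 'a mpoly" where
  "sps_poly \<Phi> = (\<Sum>t\<leftarrow>\<Phi>. \<Prod>a\<leftarrow>t. affine_poly a)"

definition sps_multilinear :: "('a::zero) spsformula \<Rightarrow> bool" where
  "sps_multilinear \<Phi> = (\<forall>t\<in>set \<Phi>. \<forall>i<length t. \<forall>j<length t. i \<noteq> j \<longrightarrow>
      Poly_Mapping.keys (snd (t ! i)) \<inter> Poly_Mapping.keys (snd (t ! j)) = {})"

text \<open>Size: one node per product gate, and for each affine form one node plus one per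
variable occurring in it (number of wires into the bottom sum gate).\<close>
definition sps_size :: "('a::zero) spsformula \<Rightarrow> nat" where
  "sps_size \<Phi> = (\<Sum>t\<leftarrow>\<Phi>. 1 + (\<Sum>a\<leftarrow>t. 1 + card (Poly_Mapping.keys (snd a))))"

text \<open>The coordinate S corresponds to the variable X_t (0-based) with
t = sum_{i \<in> S} 2^i, i.e. S = {i<n. bit t i}.\<close>

definition set_of_index :: "nat \<Rightarrow> nat \<Rightarrow> nat set" where
  "set_of_index n t = {i. i < n \<and> bit t i}"

definition gen_compose :: "nat \<Rightarrow> (nat set \<Rightarrow> ('a::comm_ring_1) mpoly) \<Rightarrow> 'a mpoly \<Rightarrow> 'a mpoly" where
  "gen_compose n G F = mpoly_subst (\<lambda>t. if t < 2 ^ n then G (set_of_index n t) else 0) F"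

definition succinct_generator ::
  "nat \<Rightarrow> nat \<Rightarrow> (nat set \<Rightarrow> ('a::comm_ring_1) mpoly) \<Rightarrow> real \<Rightarrow> 'a mpoly set \<Rightarrow> bool" where
  "succinct_generator n m G s' D \<longleftrightarrow>
     (\<forall>S. S \<subseteq> {0..<n} \<longrightarrow> mpoly_vars (G S) \<subseteq> {0..<m}) \<and>
     (\<forall>\<alpha>::nat \<Rightarrow> 'a. \<exists>\<Phi>. sps_multilinear \<Phi> \<and> real (sps_size \<Phi>) \<le> s' \<and>
        sps_poly \<Phi> = (\<Sum>S\<in>Pow {0..<n}. mConst (mpoly_eval \<alpha> (G S)) * (\<Prod>i\<in>S. mVar i))) \<and>
     (\<forall>F\<in>D. F \<noteq> 0 \<longleftrightarrow> gen_compose n G F \<noteq> 0)"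

text \<open>Variables of the generator (0-based): y_j is variable j (j < k), and z_{j,i} is variable
k + j*n + i (j < k, i < n); so m = k + k*n. The x-variables x_i (i < n) are the variables of
the outer polynomial ring, whose coefficients are polynomials in y, z.\<close>

definition zvar :: "nat \<Rightarrow> nat \<Rightarrow> nat \<Rightarrow> nat \<Rightarrow> nat" where
  "zvar n k j i = k + j * n + i"

definition P_poly :: "nat \<Rightarrow> nat \<Rightarrow> nat \<Rightarrow> (('a::comm_ring_1) mpoly) mpoly" where
  "P_poly n k j = (\<Prod>i<n. mConst (mVar (zvar n k j i)) * mVar i + mConst (1 - mVar (zvar n k j i)))"

definition Q_SSV :: "nat \<Rightarrow> nat \<Rightarrow> (('a::comm_ring_1) mpoly) mpoly" where
  "Q_SSV n k = (\<Sum>j<k. mConst (mVar j) * P_poly n k j)"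

definition Q_SSSV :: "nat \<Rightarrow> nat \<Rightarrow> (('a::comm_ring_1) mpoly) mpoly" where
  "Q_SSSV n k = Q_SSV n k + (\<Prod>i<n. mVar i + 1)"

definition G_SSSV :: "nat \<Rightarrow> nat \<Rightarrow> nat set \<Rightarrow> ('a::comm_ring_1) mpoly" where
  "G_SSSV n k S = Poly_Mapping.lookup (Q_SSSV n k) (mono_of_set S)"

text \<open>Polynomials in F[X_1..X_N] (0-based variables X_0..X_{N-1}) with at most s monomials.\<close>
definition sparse_class :: "nat \<Rightarrow> nat \<Rightarrow> ('a::zero) mpoly set" where
  "sparse_class N s = {F. mpoly_vars F \<subseteq> {0..<N} \<and> card (Poly_Mapping.keys F) \<le> s}"

end

theory Submission
  imports Defs
begin


definition monf :: "(nat \<Rightarrow> 'b::comm_ring_1) \<Rightarrow> (nat \<Rightarrow>\<^sub>0 nat) \<Rightarrow> 'b" where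
  "monf f m = (\<Prod>i\<in>Poly_Mapping.keys m. f i ^ Poly_Mapping.lookup m i)"

definition ev :: "('a::comm_ring_1 \<Rightarrow> 'b::comm_ring_1) \<Rightarrow> (nat \<Rightarrow> 'b) \<Rightarrow> 'a mpoly \<Rightarrow> 'b" where
  "ev \<phi> f p = (\<Sum>m\<in>Poly_Mapping.keys p. \<phi> (Poly_Mapping.lookup p m) * monf f m)"

lemma monf_superset:
  assumes "finite B" "Poly_Mapping.keys m \<subseteq> B"
  shows "monf f m = (\<Prod>i\<in>B. f i ^ Poly_Mapping.lookup m i)"
  unfolding monf_def
  by (rule prod.mono_neutral_left) (use assms in \<open>auto simp: in_keys_iff\<close>)

lemma monf_add: "monf f (m + m') = monf f m * monf f m'"
proof -
  let ?B = "Poly_Mapping.keys m \<union> Poly_Mapping.keys m'"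
  have "monf f (m + m') = (\<Prod>i\<in>?B. f i ^ Poly_Mapping.lookup (m+m') i)"
    by (rule monf_superset) (use keys_add[of m m'] in auto)
  also have "\<dots> = (\<Prod>i\<in>?B. f i ^ Poly_Mapping.lookup m i) * (\<Prod>i\<in>?B. f i ^ Poly_Mapping.lookup m' i)"
    by (simp add: lookup_add power_add prod.distrib)
  also have "\<dots> = monf f m * monf f m'"
    by (subst (1 2) monf_superset[of ?B]) auto
  finally show ?thesis .
qed

lemma monf_zero [simp]: "monf f 0 = 1"
  by (simp add: monf_def)

lemma monf_single1 [simp]: "monf f (Poly_Mapping.single i 1) = f i"
  unfolding monf_def by simp

locale rhom =
  fixes \<phi> :: "'a::comm_ring_1 \<Rightarrow> 'b::comm_ring_1"
  assumes hadd: "\<phi> (a + b) = \<phi> a + \<phi> b" and hmult: "\<phi> (a * b) = \<phi> a * \<phi> b" and hone: "\<phi> 1 = 1"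
begin
lemma hzero [simp]: "\<phi> 0 = 0" using hadd[of 0 0] by simp
lemma hminus: "\<phi> (- a) = - \<phi> a"
  using hadd[of a "-a"] by (metis add.commute add_right_cancel hzero neg_eq_iff_add_eq_0)
lemma hdiff: "\<phi> (a - b) = \<phi> a - \<phi> b"
  using hadd[of a "-b"] hminus[of b] by simp
lemma hsum: "\<phi> (sum g A) = (\<Sum>x\<in>A. \<phi> (g x))"
  by (induct A rule: infinite_finite_induct) (auto simp: hadd)
lemma hprod: "\<phi> (prod g A) = (\<Prod>x\<in>A. \<phi> (g x))"
  by (induct A rule: infinite_finite_induct) (auto simp: hmult hone)
lemma hpower: "\<phi> (a ^ n) = \<phi> a ^ n"
  by (induct n) (auto simp: hmult hone)
end

lemma poly_expand: "p = (\<Sum>m\<in>Poly_Mapping.keys p. Poly_Mapping.single m (Poly_Mapping.lookup p m))"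
proof (rule poly_mapping_eqI)
  fix k
  show "Poly_Mapping.lookup p k = Poly_Mapping.lookup (\<Sum>m\<in>Poly_Mapping.keys p. Poly_Mapping.single m (Poly_Mapping.lookup p m)) k"
    by (simp add: lookup_sum lookup_single when_def in_keys_iff)
qed

context rhom begin

lemma ev_superset:
  assumes "finite A" "Poly_Mapping.keys p \<subseteq> A"
  shows "ev \<phi> f p = (\<Sum>m\<in>A. \<phi> (Poly_Mapping.lookup p m) * monf f m)"
  unfolding ev_def
  by (rule sum.mono_neutral_left) (use assms in \<open>auto simp: in_keys_iff\<close>)

lemma ev_add: "ev \<phi> f (p + q) = ev \<phi> f p + ev \<phi> f q"
proof -
  let ?A = "Poly_Mapping.keys p \<union> Poly_Mapping.keys q"
  have "ev \<phi> f (p + q) = (\<Sum>m\<in>?A. \<phi> (Poly_Mapping.lookup (p+q) m) * monf f m)"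
    by (rule ev_superset) (use keys_add[of p q] in auto)
  also have "\<dots> = (\<Sum>m\<in>?A. \<phi> (Poly_Mapping.lookup p m) * monf f m) + (\<Sum>m\<in>?A. \<phi> (Poly_Mapping.lookup q m) * monf f m)"
    by (simp add: lookup_add hadd distrib_right sum.distrib)
  also have "\<dots> = ev \<phi> f p + ev \<phi> f q"
    by (subst (1 2) ev_superset[of ?A]) auto
  finally show ?thesis .
qed

lemma ev_zero [simp]: "ev \<phi> f 0 = 0" by (simp add: ev_def)

lemma ev_sum: "ev \<phi> f (sum g A) = (\<Sum>x\<in>A. ev \<phi> f (g x))"
  by (induct A rule: infinite_finite_induct) (auto simp: ev_add)

lemma ev_single: "ev \<phi> f (Poly_Mapping.single m c) = \<phi> c * monf f m"
  by (simp add: ev_def)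

lemma ev_mult: "ev \<phi> f (p * q) = ev \<phi> f p * ev \<phi> f q"
proof -
  have "p * q = (\<Sum>m\<in>Poly_Mapping.keys p. Poly_Mapping.single m (Poly_Mapping.lookup p m)) *
        (\<Sum>m\<in>Poly_Mapping.keys q. Poly_Mapping.single m (Poly_Mapping.lookup q m))"
    by (subst (1) poly_expand, subst (1) poly_expand[of q]) (rule refl)
  also have "\<dots> = (\<Sum>m\<in>Poly_Mapping.keys p. \<Sum>m'\<in>Poly_Mapping.keys q.
       Poly_Mapping.single (m + m') (Poly_Mapping.lookup p m * Poly_Mapping.lookup q m'))"
    by (simp add: sum_product mult_single)
  finally have "ev \<phi> f (p * q) = (\<Sum>m\<in>Poly_Mapping.keys p. \<Sum>m'\<in>Poly_Mapping.keys q.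
       \<phi> (Poly_Mapping.lookup p m) * monf f m * (\<phi> (Poly_Mapping.lookup q m') * monf f m'))"
    by (simp add: ev_sum ev_single hmult monf_add mult_ac)
  also have "\<dots> = ev \<phi> f p * ev \<phi> f q"
    by (simp add: ev_def sum_product)
  finally show ?thesis .
qed

lemma rhom_ev: "rhom (ev \<phi> f)"
proof
  show "ev \<phi> f 1 = 1"
    using ev_single[of f 0 1] by (simp add: hone)
qed (auto simp: ev_add ev_mult)

lemma ev_mConst [simp]: "ev \<phi> f (mConst c) = \<phi> c"
  by (simp add: mConst_def ev_single)

lemma ev_mVar [simp]: "ev \<phi> f (mVar i) = f i"
  unfolding mVar_def ev_single monf_single1 hone by simp

end

lemma rhom_id: "rhom id" by unfold_locales auto

lemma rhom_mConst: "rhom mConst"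
  by unfold_locales (auto simp: mConst_def single_add mult_single)

lemma eval_ev: "mpoly_eval f = ev id f"
  by (rule ext) (simp add: mpoly_eval_def ev_def monf_def)

lemma subst_ev: "mpoly_subst g = ev mConst g"
  by (rule ext) (simp add: mpoly_subst_def ev_def monf_def)

lemma rhom_eval: "rhom (mpoly_eval f)"
  unfolding eval_ev by (rule rhom.rhom_ev[OF rhom_id])

lemma rhom_subst: "rhom (mpoly_subst g)"
  unfolding subst_ev by (rule rhom.rhom_ev[OF rhom_mConst])

lemma eval_mVar [simp]: "mpoly_eval f (mVar i) = f i"
  unfolding eval_ev by (rule rhom.ev_mVar[OF rhom_id])

lemma eval_mConst [simp]: "mpoly_eval f (mConst c) = c"
  unfolding eval_ev using rhom.ev_mConst[OF rhom_id] by simp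

lemma subst_mVar [simp]: "mpoly_subst g (mVar i) = g i"
  unfolding subst_ev by (rule rhom.ev_mVar[OF rhom_mConst])

lemma subst_mConst [simp]: "mpoly_subst g (mConst c) = mConst c"
  unfolding subst_ev by (rule rhom.ev_mConst[OF rhom_mConst])

lemma subst_compose:
  assumes "rhom \<psi>" "\<And>c. \<psi> (mConst c) = mConst c"
  shows "\<psi> (mpoly_subst g F) = mpoly_subst (\<lambda>t. \<psi> (g t)) F"
  unfolding mpoly_subst_def
  by (simp add: rhom.hsum[OF assms(1)] rhom.hmult[OF assms(1)] rhom.hprod[OF assms(1)]
      rhom.hpower[OF assms(1)] assms(2))


lemma mono_of_set_insert:
  "finite S \<Longrightarrow> i \<notin> S \<Longrightarrow> mono_of_set (insert i S) = Poly_Mapping.single i 1 + mono_of_set S"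
  by (simp add: mono_of_set_def)

lemma lookup_mono_of_set:
  "finite S \<Longrightarrow> Poly_Mapping.lookup (mono_of_set S) i = (if i \<in> S then 1 else 0)"
  by (simp add: mono_of_set_def lookup_sum lookup_single when_def)

lemma mono_of_set_inj:
  assumes "finite S" "finite R" "mono_of_set S = mono_of_set R"
  shows "S = R"
proof -
  have "\<And>i. (if i \<in> S then 1 else 0::nat) = (if i \<in> R then 1 else 0)"
    using assms lookup_mono_of_set by metis
  then show ?thesis by (metis one_neq_zero subsetI subset_antisym)
qed

lemma prod_mVar:
  "finite S \<Longrightarrow> (\<Prod>i\<in>S. mVar i) = (Poly_Mapping.single (mono_of_set S) 1 :: 'a::comm_ring_1 mpoly)"
proof (induct S rule: finite_induct)
  case empty then show ?case by (simp add: mono_of_set_def)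
next
  case (insert i S)
  then show ?case by (simp add: mono_of_set_insert mVar_def mult_single)
qed

lemma mConst_mult_single: "mConst c * Poly_Mapping.single m d = Poly_Mapping.single m (c * d)"
  by (simp add: mConst_def mult_single)

lemma lookup_mConst_mult: "Poly_Mapping.lookup (mConst c * p) m = c * Poly_Mapping.lookup p m"
proof -
  have "mConst c * p = (\<Sum>m'\<in>Poly_Mapping.keys p. Poly_Mapping.single m' (c * Poly_Mapping.lookup p m'))"
    by (subst poly_expand) (simp add: sum_distrib_left mConst_mult_single)
  then show ?thesis
    by (simp add: lookup_sum lookup_single when_def sum_distrib_left[symmetric] in_keys_iff
          cong: if_cong)
qed

lemma prod_affine_expand:
  "(\<Prod>i<n. mConst (a i) * mVar i + mConst (b i)) =
   (\<Sum>R\<in>Pow {..<n}. Poly_Mapping.single (mono_of_set R)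
        ((\<Prod>i\<in>R. a i) * (\<Prod>i\<in>{..<n} - R. b i)) :: 'a::comm_ring_1 mpoly)"
proof -
  have "(\<Prod>i<n. mConst (a i) * mVar i + mConst (b i)) =
    (\<Sum>R\<in>Pow {..<n}. (\<Prod>i\<in>R. mConst (a i) * mVar i) * (\<Prod>i\<in>{..<n} - R. mConst (b i)))"
    by (rule prod_add) simp
  also have "\<dots> = (\<Sum>R\<in>Pow {..<n}. Poly_Mapping.single (mono_of_set R)
        ((\<Prod>i\<in>R. a i) * (\<Prod>i\<in>{..<n} - R. b i)))"
  proof (rule sum.cong)
    fix R assume R: "R \<in> Pow {..<n}"
    then have fin: "finite R" by (auto intro: finite_subset)
    have "(\<Prod>i\<in>R. mConst (a i) * mVar i) * (\<Prod>i\<in>{..<n} - R. mConst (b i)) =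
        mConst (\<Prod>i\<in>R. a i) * (\<Prod>i\<in>R. mVar i) * mConst (\<Prod>i\<in>{..<n} - R. b i)"
      by (simp add: prod.distrib rhom.hprod[OF rhom_mConst])
    also have "\<dots> = Poly_Mapping.single (mono_of_set R) ((\<Prod>i\<in>R. a i) * (\<Prod>i\<in>{..<n} - R. b i))"
      by (simp add: prod_mVar[OF fin] mConst_mult_single mult.commute[of _ "mConst _"] mult.assoc)
        (simp add: mult.commute)
    finally show "(\<Prod>i\<in>R. mConst (a i) * mVar i) * (\<Prod>i\<in>{..<n} - R. mConst (b i)) =
        Poly_Mapping.single (mono_of_set R) ((\<Prod>i\<in>R. a i) * (\<Prod>i\<in>{..<n} - R. b i))" .
  qed simp
  finally show ?thesis .
qed

lemma lookup_expand:
  assumes "S \<subseteq> {..<n}"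
  shows "Poly_Mapping.lookup (\<Sum>R\<in>Pow {..<n}. Poly_Mapping.single (mono_of_set R) (c R)) (mono_of_set S) = c S"
proof -
  have finS: "finite S" using assms finite_subset by blast
  have "Poly_Mapping.lookup (\<Sum>R\<in>Pow {..<n}. Poly_Mapping.single (mono_of_set R) (c R)) (mono_of_set S)
     = (\<Sum>R\<in>Pow {..<n}. (c R when mono_of_set R = mono_of_set S))"
    by (simp add: lookup_sum lookup_single)
  also have "\<dots> = (\<Sum>R\<in>Pow {..<n}. (c R when R = S))"
  proof (rule sum.cong)
    fix R assume "R \<in> Pow {..<n}"
    then have "finite R" using finite_subset by blast
    then show "(c R when mono_of_set R = mono_of_set S) = (c R when R = S)"
      using mono_of_set_inj[OF _ finS] by (auto simp: when_def)
  qed simp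
  also have "\<dots> = c S" using assms by (simp add: when_def)
  finally show ?thesis .
qed

lemma lookup_expand':
  assumes "S \<subseteq> {..<n}"
  shows "(\<Sum>R\<in>Pow {..<n}. Poly_Mapping.lookup (Poly_Mapping.single (mono_of_set R) (c R)) (mono_of_set S)) = c S"
  using lookup_expand[OF assms, of c] by (simp add: lookup_sum)

lemma G_closed:
  assumes "S \<subseteq> {..<n}"
  shows "(G_SSSV n k S :: 'a::comm_ring_1 mpoly) =
    (\<Sum>j<k. mVar j * ((\<Prod>i\<in>S. mVar (zvar n k j i)) * (\<Prod>i\<in>{..<n} - S. 1 - mVar (zvar n k j i)))) + 1"
proof -
  have P: "P_poly n k j = (\<Sum>R\<in>Pow {..<n}. Poly_Mapping.single (mono_of_set R)
        ((\<Prod>i\<in>R. mVar (zvar n k j i)) * (\<Prod>i\<in>{..<n} - R. 1 - mVar (zvar n k j i))))" for j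
    unfolding P_poly_def by (rule prod_affine_expand)
  have O: "(\<Prod>i<n. mVar i + 1) = (\<Sum>R\<in>Pow {..<n}. Poly_Mapping.single (mono_of_set R)
        ((\<Prod>i\<in>R. 1) * (\<Prod>i\<in>{..<n} - R. 1)) :: 'a mpoly mpoly)"
    using prod_affine_expand[where a="\<lambda>_. 1::'a mpoly" and n=n and b="\<lambda>_. 1"]
    by (simp add: mConst_def)
  show ?thesis
    unfolding G_SSSV_def Q_SSSV_def Q_SSV_def
    by (simp add: lookup_add lookup_sum lookup_mConst_mult P O lookup_expand'[OF assms]
        del: prod_constant)
qed


lemma vars_add: "mpoly_vars (p + q) \<subseteq> mpoly_vars p \<union> mpoly_vars q"
  unfolding mpoly_vars_def using keys_add[of p q] by blast

lemma vars_mult: "mpoly_vars (p * q) \<subseteq> mpoly_vars p \<union> mpoly_vars q"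
proof
  fix x assume "x \<in> mpoly_vars (p * q)"
  then obtain m where m: "m \<in> Poly_Mapping.keys (p * q)" "x \<in> Poly_Mapping.keys m"
    unfolding mpoly_vars_def by blast
  then obtain a b where "m = a + b" "a \<in> Poly_Mapping.keys p" "b \<in> Poly_Mapping.keys q"
    using keys_mult[of p q] by blast
  then show "x \<in> mpoly_vars p \<union> mpoly_vars q"
    using m(2) keys_add[of a b] unfolding mpoly_vars_def by blast
qed

lemma vars_minus: "mpoly_vars (- p) = mpoly_vars p"
  unfolding mpoly_vars_def by simp

lemma vars_one: "mpoly_vars (1 :: 'a::comm_ring_1 mpoly) = {}"
  unfolding mpoly_vars_def by simp

lemma vars_mVar: "mpoly_vars (mVar i :: 'a::comm_ring_1 mpoly) = {i}"
  unfolding mpoly_vars_def mVar_def by simp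

lemma vars_diff: "mpoly_vars (p - q :: 'a::comm_ring_1 mpoly) \<subseteq> mpoly_vars p \<union> mpoly_vars q"
  using vars_add[of p "-q"] vars_minus[of q] by simp

lemma vars_sum: "(\<And>x. x \<in> A \<Longrightarrow> mpoly_vars (g x) \<subseteq> V) \<Longrightarrow> mpoly_vars (sum g A) \<subseteq> V"
proof (induct A rule: infinite_finite_induct)
  case (insert x F) then show ?case using vars_add[of "g x" "sum g F"] by auto
qed (auto simp: mpoly_vars_def)

lemma vars_prod: "(\<And>x. x \<in> A \<Longrightarrow> mpoly_vars (g x) \<subseteq> V) \<Longrightarrow> mpoly_vars (prod g A :: 'a::comm_ring_1 mpoly) \<subseteq> V"
proof (induct A rule: infinite_finite_induct)
  case (insert x F) then show ?case using vars_mult[of "g x" "prod g F"] by auto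
qed (auto simp: vars_one)

lemma G_vars:
  assumes "S \<subseteq> {0..<n}"
  shows "mpoly_vars (G_SSSV n k S :: 'a::comm_ring_1 mpoly) \<subseteq> {0..<k + k * n}"
proof -
  have S: "S \<subseteq> {..<n}" using assms by auto
  have z: "zvar n k j i < k + k * n" if "j < k" "i < n" for j i
  proof -
    have "j * n + i < (j + 1) * n" using that by simp
    also have "\<dots> \<le> k * n" using that by (intro mult_right_mono) auto
    finally show ?thesis unfolding zvar_def by simp
  qed
  show ?thesis
    unfolding G_closed[OF S]
    apply (rule subset_trans[OF vars_add], rule Un_least)
     apply (rule vars_sum)
     apply (rule subset_trans[OF vars_mult], rule Un_least)
      apply (simp add: vars_mVar)
     apply (rule subset_trans[OF vars_mult], rule Un_least)
      apply (rule vars_prod)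
      apply (use z S in \<open>force simp: vars_mVar\<close>)
     apply (rule vars_prod)
     apply (rule subset_trans[OF vars_diff])
     apply (use z in \<open>force simp: vars_mVar vars_one\<close>)
    apply (simp add: vars_one)
    done
qed


lemma affine_single: "affine_poly (c, Poly_Mapping.single i d) = mConst c + mConst d * (mVar i :: 'a::comm_ring_1 mpoly)"
  unfolding affine_poly_def by (cases "d = 0") (simp_all add: mConst_def)

lemma affine_zero: "affine_poly (c, 0) = (mConst c :: 'a::comm_ring_1 mpoly)"
  by (simp add: affine_poly_def)

definition rowj :: "'a::comm_ring_1 \<Rightarrow> (nat \<Rightarrow> 'a) \<Rightarrow> nat \<Rightarrow> 'a affine list" where
  "rowj a z n = (a, 0) # map (\<lambda>i. (1 - z i, Poly_Mapping.single i (z i))) [0..<n]"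

definition lastrow :: "nat \<Rightarrow> 'a::comm_ring_1 affine list" where
  "lastrow n = map (\<lambda>i. (1, Poly_Mapping.single i 1)) [0..<n]"

definition Phi :: "(nat \<Rightarrow> 'a::comm_ring_1) \<Rightarrow> nat \<Rightarrow> nat \<Rightarrow> 'a spsformula" where
  "Phi \<alpha> n k = map (\<lambda>j. rowj (\<alpha> j) (\<lambda>i. \<alpha> (zvar n k j i)) n) [0..<k] @ [lastrow n]"

lemma prod_list_upt: "prod_list (map g [0..<n]) = (\<Prod>i<n. g i)"
  by (simp add: prod.distinct_set_conv_list[symmetric] atLeast0LessThan)

lemma sum_list_upt': "sum_list (map g [0..<n]) = (\<Sum>i<n. g i)"
  by (simp add: sum.distinct_set_conv_list[symmetric] atLeast0LessThan)

lemma single_sum: "Poly_Mapping.single m (sum f A) = (\<Sum>x\<in>A. Poly_Mapping.single m (f x))"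
  by (induct A rule: infinite_finite_induct) (auto simp: single_add)

lemma rowj_poly:
  "prod_list (map affine_poly (rowj a z n)) =
   (\<Sum>R\<in>Pow {..<n}. Poly_Mapping.single (mono_of_set R)
        (a * ((\<Prod>i\<in>R. z i) * (\<Prod>i\<in>{..<n} - R. 1 - z i))) :: 'a::comm_ring_1 mpoly)"
proof -
  have "prod_list (map affine_poly (rowj a z n)) =
     mConst a * (\<Prod>i<n. mConst (z i) * mVar i + mConst (1 - z i))"
    by (simp add: rowj_def prod_list_upt affine_zero affine_single add.commute)
  then show ?thesis
    by (simp add: prod_affine_expand sum_distrib_left mConst_mult_single)
qed

lemma lastrow_poly:
  "prod_list (map affine_poly (lastrow n)) =
   (\<Sum>R\<in>Pow {..<n}. Poly_Mapping.single (mono_of_set R) 1 :: 'a::comm_ring_1 mpoly)"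
proof -
  have "prod_list (map affine_poly (lastrow n)) =
     (\<Prod>i<n. mConst 1 * mVar i + mConst (1::'a))"
    by (simp add: lastrow_def prod_list_upt affine_single add.commute)
  then show ?thesis
    by (simp add: prod_affine_expand)
qed

lemma Phi_poly:
  assumes "n \<ge> 1"
  shows "sps_poly (Phi \<alpha> n k) =
    (\<Sum>S\<in>Pow {0..<n}. mConst (mpoly_eval \<alpha> (G_SSSV n k S)) * (\<Prod>i\<in>S. mVar i) :: 'a::comm_ring_1 mpoly)"
proof -
  let ?X = "\<lambda>j R. (\<Prod>i\<in>R. \<alpha> (zvar n k j i)) * (\<Prod>i\<in>{..<n} - R. 1 - \<alpha> (zvar n k j i))"
  have ev: "mpoly_eval \<alpha> (G_SSSV n k S) = (\<Sum>j<k. \<alpha> j * ?X j S) + 1" if "S \<subseteq> {..<n}" for S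
    unfolding G_closed[OF that]
    by (simp add: rhom.hadd[OF rhom_eval] rhom.hsum[OF rhom_eval] rhom.hmult[OF rhom_eval]
        rhom.hprod[OF rhom_eval] rhom.hdiff[OF rhom_eval] rhom.hone[OF rhom_eval])
  have "sps_poly (Phi \<alpha> n k) = (\<Sum>j<k. \<Sum>R\<in>Pow {..<n}. Poly_Mapping.single (mono_of_set R) (\<alpha> j * ?X j R))
      + (\<Sum>R\<in>Pow {..<n}. Poly_Mapping.single (mono_of_set R) 1)"
    by (simp add: sps_poly_def Phi_def rowj_poly lastrow_poly sum_list_upt' comp_def)
  also have "\<dots> = (\<Sum>R\<in>Pow {..<n}. Poly_Mapping.single (mono_of_set R) ((\<Sum>j<k. \<alpha> j * ?X j R) + 1))"
    by (simp add: single_add single_sum sum.distrib sum.swap[of _ "{..<k}"])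
  also have "\<dots> = (\<Sum>S\<in>Pow {0..<n}. mConst (mpoly_eval \<alpha> (G_SSSV n k S)) * (\<Prod>i\<in>S. mVar i))"
  proof (rule sum.cong)
    fix R assume "R \<in> Pow {0..<n}"
    then have R: "finite R" "R \<subseteq> {..<n}" by (auto intro: finite_subset)
    show "Poly_Mapping.single (mono_of_set R) ((\<Sum>j<k. \<alpha> j * ?X j R) + 1) =
      mConst (mpoly_eval \<alpha> (G_SSSV n k R)) * (\<Prod>i\<in>R. mVar i)"
      by (simp add: ev[OF R(2)] prod_mVar[OF R(1)] mConst_mult_single)
  qed (simp add: atLeast0LessThan)
  finally show ?thesis .
qed


lemma rowj_keys:
  assumes "i < length (rowj a z n)"
  shows "Poly_Mapping.keys (snd (rowj a z n ! i)) \<subseteq> (if i = 0 then {} else {i - 1})"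
proof (cases i)
  case 0 then show ?thesis by (simp add: rowj_def)
next
  case (Suc i')
  then have "i' < n" using assms by (simp add: rowj_def)
  then show ?thesis using Suc by (simp add: rowj_def)
qed

lemma lastrow_keys:
  assumes "i < length (lastrow n)"
  shows "Poly_Mapping.keys (snd ((lastrow n :: 'a::comm_ring_1 affine list) ! i)) = {i}"
  using assms by (simp add: lastrow_def)

lemma Phi_multilinear: "sps_multilinear (Phi \<alpha> n k)"
  unfolding sps_multilinear_def
proof (intro ballI allI impI)
  fix t i j assume t: "t \<in> set (Phi \<alpha> n k)" and ij: "i < length t" "j < length t" "i \<noteq> j"
  have "t \<in> set (map (\<lambda>j. rowj (\<alpha> j) (\<lambda>i. \<alpha> (zvar n k j i)) n) [0..<k]) \<or> t = lastrow n"
    using t unfolding Phi_def by (simp only: set_append Un_iff set_simps) blast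
  then consider jj where "t = rowj (\<alpha> jj) (\<lambda>i. \<alpha> (zvar n k jj i)) n" | "t = lastrow n"
    by (simp only: set_map) blast
  then show "Poly_Mapping.keys (snd (t ! i)) \<inter> Poly_Mapping.keys (snd (t ! j)) = {}"
  proof cases
    case 1
    let ?r = "rowj (\<alpha> jj) (\<lambda>i. \<alpha> (zvar n k jj i)) n"
    have a: "Poly_Mapping.keys (snd (?r ! i)) \<subseteq> (if i = 0 then {} else {i - 1})"
      using rowj_keys ij unfolding 1 by blast
    have b: "Poly_Mapping.keys (snd (?r ! j)) \<subseteq> (if j = 0 then {} else {j - 1})"
      using rowj_keys ij unfolding 1 by blast
    show ?thesis unfolding 1 using a b ij(3)
      by (cases "i = 0"; cases "j = 0") auto
  next
    case 2
    have "Poly_Mapping.keys (snd (t ! i)) = {i}" "Poly_Mapping.keys (snd (t ! j)) = {j}"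
      using lastrow_keys ij unfolding 2 by blast+
    then show ?thesis using ij(3) by simp
  qed
qed

lemma Phi_size: "sps_size (Phi \<alpha> n k) \<le> (k + 1) * (2 * n + 2)"
proof -
  have row: "1 + (\<Sum>a\<leftarrow>rowj b z n. 1 + card (Poly_Mapping.keys (snd a))) \<le> 2 * n + 2" for b and z :: "nat \<Rightarrow> 'a"
  proof -
    have "(\<Sum>i<n. 1 + card (Poly_Mapping.keys (Poly_Mapping.single i (z i)))) \<le> (\<Sum>i<n. (2::nat))"
      by (rule sum_mono) simp
    then show ?thesis by (simp add: rowj_def sum_list_upt' comp_def)
  qed
  have last: "1 + (\<Sum>a\<leftarrow>(lastrow n :: 'a affine list). 1 + card (Poly_Mapping.keys (snd a))) = 2 * n + 1"
    by (simp add: lastrow_def sum_list_upt' comp_def)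
  have "sps_size (Phi \<alpha> n k) = (\<Sum>j<k. 1 + (\<Sum>a\<leftarrow>rowj (\<alpha> j) (\<lambda>i. \<alpha> (zvar n k j i)) n. 1 + card (Poly_Mapping.keys (snd a))))
      + (2 * n + 1)"
    unfolding sps_size_def Phi_def using last by (simp add: sum_list_upt' comp_def)
  also have "\<dots> \<le> (\<Sum>j<k. 2 * n + 2) + (2 * n + 1)"
    by (intro add_right_mono sum_mono row)
  also have "\<dots> \<le> (k + 1) * (2 * n + 2)" by simp
  finally show ?thesis .
qed



subsection \<open>Isolation lemma\<close>

lemma isolate:
  fixes A :: "(nat \<Rightarrow>\<^sub>0 nat) set" and c :: "(nat \<Rightarrow>\<^sub>0 nat) \<Rightarrow> 'a::comm_ring_1"
  assumes "finite A" "A \<noteq> {}" "\<And>m. m \<in> A \<Longrightarrow> c m \<noteq> 0"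
  shows "\<exists>T m0. m0 \<in> A \<and> finite T \<and> T \<subseteq> (\<Union>m\<in>A. Poly_Mapping.keys m) \<and> 2 ^ card T \<le> card A \<and>
     (\<Sum>m\<in>{m\<in>A. \<forall>t\<in>T. Poly_Mapping.lookup m t = Poly_Mapping.lookup m0 t}. c m) \<noteq> 0"
  using assms
proof (induct "card A" arbitrary: A rule: less_induct)
  case less
  show ?case
  proof (cases "card A = 1")
    case True
    then obtain m0 where A: "A = {m0}" using card_1_singletonE by blast
    show ?thesis
      by (rule exI[of _ "{}"], rule exI[of _ m0]) (use A less.prems in simp)
  next
    case False
    have "card A \<noteq> 0" using less.prems by simp
    with False have "\<not> card A \<le> Suc 0" by linarith
    then have "\<not> (\<forall>a\<in>A. \<forall>b\<in>A. a = b)" using card_le_Suc0_iff_eq[OF less.prems(1)] by simp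
    then obtain m1 m2 where m12: "m1 \<in> A" "m2 \<in> A" "m1 \<noteq> m2" by blast
    then obtain v where v: "Poly_Mapping.lookup m1 v \<noteq> Poly_Mapping.lookup m2 v"
      using m12(3) poly_mapping_eqI[of m1 m2] by blast
    define C1 where "C1 = {m\<in>A. Poly_Mapping.lookup m v = Poly_Mapping.lookup m1 v}"
    define C2 where "C2 = {m\<in>A. Poly_Mapping.lookup m v = Poly_Mapping.lookup m2 v}"
    have fin: "finite C1" "finite C2" using less.prems(1) by (auto simp: C1_def C2_def)
    have disj: "C1 \<inter> C2 = {}" using v by (auto simp: C1_def C2_def)
    have "card C1 + card C2 = card (C1 \<union> C2)" using card_Un_disjoint[OF fin disj] by simp
    also have "\<dots> \<le> card A" by (rule card_mono[OF less.prems(1)]) (auto simp: C1_def C2_def)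
    finally have sum12: "card C1 + card C2 \<le> card A" .
    obtain C w where C: "C = {m\<in>A. Poly_Mapping.lookup m v = Poly_Mapping.lookup w v}" "w \<in> A"
      "2 * card C \<le> card A"
    proof (cases "card C1 \<le> card C2")
      case True
      have "2 * card C1 \<le> card A" using True sum12 by linarith
      then show ?thesis using that[of C1 m1] C1_def m12(1) by blast
    next
      case False
      have "2 * card C2 \<le> card A" using False sum12 by linarith
      then show ?thesis using that[of C2 m2] C2_def m12(2) by blast
    qed
    have wC: "w \<in> C" using C by simp
    have finC: "finite C" using C less.prems(1) by simp
    have "card C > 0" using finC wC card_gt_0_iff by blast
    then have lt: "card C < card A" using C(3) by linarith
    have "C \<subseteq> A" using C by auto
    obtain T m0 where IH: "m0 \<in> C" "finite T" "T \<subseteq> (\<Union>m\<in>C. Poly_Mapping.keys m)" "2 ^ card T \<le> card C"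
      "(\<Sum>m\<in>{m\<in>C. \<forall>t\<in>T. Poly_Mapping.lookup m t = Poly_Mapping.lookup m0 t}. c m) \<noteq> 0"
      using less.hyps[OF lt finC _ less.prems(3)] wC \<open>C \<subseteq> A\<close> by blast
    have vkeys: "v \<in> Poly_Mapping.keys m1 \<union> Poly_Mapping.keys m2"
      using v by (auto simp: in_keys_iff)
    have seteq: "{m\<in>A. \<forall>t\<in>insert v T. Poly_Mapping.lookup m t = Poly_Mapping.lookup m0 t} =
      {m\<in>C. \<forall>t\<in>T. Poly_Mapping.lookup m t = Poly_Mapping.lookup m0 t}"
      using IH(1) C(1) by auto
    have "(2::nat) ^ card (insert v T) \<le> 2 * 2 ^ card T"
      using IH(2) by (simp add: card_insert_if)
    also have "\<dots> \<le> card A" using IH(4) C(3) by linarith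
    finally have "2 ^ card (insert v T) \<le> card A" .
    moreover have "insert v T \<subseteq> (\<Union>m\<in>A. Poly_Mapping.keys m)"
      using IH(3) \<open>C \<subseteq> A\<close> vkeys m12 by blast
    moreover have "m0 \<in> A" using IH(1) \<open>C \<subseteq> A\<close> by blast
    moreover have "finite (insert v T)" using IH(2) by simp
    moreover have "(\<Sum>m\<in>{m\<in>A. \<forall>t\<in>insert v T. Poly_Mapping.lookup m t = Poly_Mapping.lookup m0 t}. c m) \<noteq> 0"
      unfolding seteq by (rule IH(5))
    ultimately show ?thesis by blast
  qed
qed



lemma set_of_index_sub: "set_of_index n t \<subseteq> {..<n}"
  by (auto simp: set_of_index_def)

lemma set_of_index_inj:
  assumes "t < 2 ^ n" "t' < 2 ^ n" "set_of_index n t = set_of_index n t'"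
  shows "t = t'"
proof -
  have "\<forall>i<n. bit t i = bit t' i" using assms(3) unfolding set_of_index_def by blast
  then have "take_bit n t = take_bit n t'"
    by (simp add: bit_eq_iff bit_take_bit_iff) blast
  then show ?thesis using assms(1,2) by (simp add: take_bit_nat_eq_self)
qed

lemma mVar_power: "(mVar i :: 'a::comm_ring_1 mpoly) ^ e = Poly_Mapping.single (Poly_Mapping.single i e) 1"
proof (induct e)
  case 0 then show ?case by simp
next
  case (Suc e) then show ?case by (simp add: mVar_def mult_single single_add[symmetric])
qed

lemma prod_mVar_pow:
  "finite B \<Longrightarrow> (\<Prod>t\<in>B. (mVar (\<sigma> t) :: 'a::comm_ring_1 mpoly) ^ e t) =
     Poly_Mapping.single (\<Sum>t\<in>B. Poly_Mapping.single (\<sigma> t) (e t)) 1"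
proof (induct B rule: finite_induct)
  case empty then show ?case by simp
next
  case (insert x B) then show ?case by (simp add: mVar_power mult_single)
qed

lemma indicator_prod:
  fixes n :: nat
  assumes "S \<subseteq> {..<n}" "B \<subseteq> {..<n}"
  shows "(\<Prod>i\<in>S. (if i \<in> B then 1 else 0)) * (\<Prod>i\<in>{..<n} - S. 1 - (if i \<in> B then 1 else 0)) =
    (if S = B then 1 else (0::'a::comm_ring_1))"
proof (cases "S = B")
  case True then show ?thesis by simp
next
  case False
  then obtain i where "i \<in> S - B \<or> i \<in> B - S" by blast
  then show ?thesis
  proof
    assume i: "i \<in> S - B"
    have "(\<Prod>i\<in>S. (if i \<in> B then 1 else 0::'a)) = 0"
      using i assms(1) finite_subset[OF assms(1) finite_lessThan] by (intro prod_zero) auto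
    then show ?thesis using False by simp
  next
    assume i: "i \<in> B - S"
    have "(\<Prod>i\<in>{..<n} - S. 1 - (if i \<in> B then 1 else 0::'a)) = 0"
      using i assms(2) by (intro prod_zero) auto
    then show ?thesis using False by simp
  qed
qed


lemma zvar_decode:
  assumes "n \<ge> 1" "i < n"
  shows "zvar n k j i \<ge> k" "(zvar n k j i - k) div n = j" "(zvar n k j i - k) mod n = i"
  using assms by (auto simp: zvar_def)

lemma hit:
  fixes F :: "'a::comm_ring_1 mpoly"
  assumes n1: "n \<ge> 1" and FD: "F \<in> sparse_class (2 ^ n) s" and F0: "F \<noteq> 0"
    and s1: "s \<ge> 1" and kdef: "k = nat \<lceil>log 2 (real s)\<rceil>"
  shows "gen_compose n (G_SSSV n k) F \<noteq> 0"
proof -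
  define A where "A = Poly_Mapping.keys F"
  have finA: "finite A" and neA: "A \<noteq> {}" using F0 by (auto simp: A_def)
  have cardA: "card A \<le> s" using FD by (simp add: sparse_class_def A_def)
  have varsF: "mpoly_vars F \<subseteq> {0..<2^n}" using FD by (simp add: sparse_class_def)
  obtain T m0 where iso: "m0 \<in> A" "finite T" "T \<subseteq> (\<Union>m\<in>A. Poly_Mapping.keys m)" "2 ^ card T \<le> card A"
    "(\<Sum>m\<in>{m\<in>A. \<forall>t\<in>T. Poly_Mapping.lookup m t = Poly_Mapping.lookup m0 t}. Poly_Mapping.lookup F m) \<noteq> 0"
    using isolate[OF finA neA, of "Poly_Mapping.lookup F"] by (auto simp: A_def in_keys_iff)
  have "T \<subseteq> {0..<2^n}" using iso(3) varsF unfolding A_def mpoly_vars_def by (rule subset_trans)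
  then have Tsub: "T \<subseteq> {..<2^n}" by auto
  define r where "r = card T"
  have "2 ^ r \<le> s" using iso(4) cardA unfolding r_def by (rule le_trans)
  then have "real r \<le> log 2 (real s)" by (rule le_log2_of_power)
  then have rk: "r \<le> k" unfolding kdef by linarith
  obtain \<tau> where bij: "bij_betw \<tau> {0..<r} T" using ex_bij_betw_nat_finite[OF iso(2)] r_def by blast
  define \<sigma> where "\<sigma> = the_inv_into {0..<r} \<tau>"
  have inj: "inj_on \<tau> {0..<r}" and img: "\<tau> ` {0..<r} = T" using bij by (auto simp: bij_betw_def)
  have \<sigma>1: "\<sigma> t < r" "\<tau> (\<sigma> t) = t" if "t \<in> T" for t
  proof -
    have "\<sigma> t \<in> {0..<r}" unfolding \<sigma>_def
      by (rule the_inv_into_into[OF inj]) (use that img in auto)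
    then show "\<sigma> t < r" by simp
    show "\<tau> (\<sigma> t) = t" unfolding \<sigma>_def
      by (rule f_the_inv_into_f[OF inj]) (use that img in auto)
  qed
  have \<sigma>2: "\<sigma> (\<tau> j) = j" "\<tau> j \<in> T" if "j < r" for j
    using that bij the_inv_into_f_f[of \<tau> "{0..<r}" j] by (auto simp: \<sigma>_def bij_betw_def)
  have \<tau>lt: "\<tau> j < 2 ^ n" if "j < r" for j using \<sigma>2(2)[OF that] Tsub by auto
  define h :: "nat \<Rightarrow> 'a mpoly" where "h v = (if v < k then (if v < r then mVar v - 1 else 0)
      else (if (v - k) div n < r \<and> bit (\<tau> ((v - k) div n)) ((v - k) mod n) then 1 else 0))" for v
  define \<psi> where "\<psi> = mpoly_subst h"
  have R: "rhom \<psi>" unfolding \<psi>_def by (rule rhom_subst)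
  have hz: "h (zvar n k j i) = (if j < r \<and> i \<in> set_of_index n (\<tau> j) then 1 else 0)" if "i < n" for j i
    using zvar_decode[OF n1 that, of k j] that by (auto simp: h_def set_of_index_def)
  have claim1: "\<psi> (G_SSSV n k (set_of_index n t)) = (if t \<in> T then mVar (\<sigma> t) else 1)"
    if t: "t < 2 ^ n" for t
  proof -
    let ?S = "set_of_index n t"
    have S: "?S \<subseteq> {..<n}" by (rule set_of_index_sub)
    have fS: "finite ?S" using S finite_subset by blast
    have "\<psi> (G_SSSV n k ?S) = (\<Sum>j<k. h j * ((\<Prod>i\<in>?S. h (zvar n k j i)) * (\<Prod>i\<in>{..<n} - ?S. 1 - h (zvar n k j i)))) + 1"
      unfolding G_closed[OF S] using R
      by (simp add: rhom.hadd rhom.hsum rhom.hmult rhom.hprod rhom.hdiff rhom.hone \<psi>_def)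
    also have "\<dots> = (\<Sum>j<k. (if j < r \<and> t = \<tau> j then mVar j - 1 else 0)) + 1"
    proof -
      have "h j * ((\<Prod>i\<in>?S. h (zvar n k j i)) * (\<Prod>i\<in>{..<n} - ?S. 1 - h (zvar n k j i))) =
          (if j < r \<and> t = \<tau> j then mVar j - 1 else 0)" if j: "j < k" for j
      proof (cases "j < r")
        case True
        have "(\<Prod>i\<in>?S. h (zvar n k j i)) * (\<Prod>i\<in>{..<n} - ?S. 1 - h (zvar n k j i)) =
            (\<Prod>i\<in>?S. (if i \<in> set_of_index n (\<tau> j) then 1 else 0)) *
            (\<Prod>i\<in>{..<n} - ?S. 1 - (if i \<in> set_of_index n (\<tau> j) then 1 else 0))"
          using S True by (intro arg_cong2[where f="(*)"] prod.cong) (auto simp: hz)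
        also have "\<dots> = (if ?S = set_of_index n (\<tau> j) then 1 else 0)"
          by (rule indicator_prod[OF S set_of_index_sub])
        also have "\<dots> = (if t = \<tau> j then 1 else 0)"
          using set_of_index_inj[OF t \<tau>lt[OF True]] by auto
        finally show ?thesis using True j by (simp add: h_def)
      next
        case False then show ?thesis using j by (simp add: h_def)
      qed
      then show ?thesis by simp
    qed
    also have "\<dots> = (if t \<in> T then mVar (\<sigma> t) else 1)"
    proof (cases "t \<in> T")
      case True
      have "(\<Sum>j<k. (if j < r \<and> t = \<tau> j then mVar j - 1 else 0)) = (\<Sum>j<k. (if j = \<sigma> t then mVar j - 1 else (0::'a mpoly)))"
        using \<sigma>1[OF True] \<sigma>2 by (intro sum.cong) auto
      also have "\<dots> = mVar (\<sigma> t) - 1" using \<sigma>1[OF True] rk by (simp add: sum.delta)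
      finally show ?thesis using True by simp
    next
      case False
      then have "(\<Sum>j<k. (if j < r \<and> t = \<tau> j then mVar j - 1 else 0)) = (0::'a mpoly)"
        using \<sigma>2 by (intro sum.neutral) auto
      then show ?thesis using False by simp
    qed
    finally show ?thesis .
  qed
  define g :: "nat \<Rightarrow> 'a mpoly" where "g t = (if t < 2 ^ n then G_SSSV n k (set_of_index n t) else 0)" for t
  have c2: "\<psi> (gen_compose n (G_SSSV n k) F) = mpoly_subst (\<lambda>t. \<psi> (g t)) F"
    unfolding gen_compose_def g_def[symmetric] \<psi>_def
    by (rule subst_compose[OF rhom_subst subst_mConst])
  define \<pi> where "\<pi> m = (\<Sum>t\<in>{t\<in>Poly_Mapping.keys m. t \<in> T}. Poly_Mapping.single (\<sigma> t) (Poly_Mapping.lookup m t))" for m :: "nat \<Rightarrow>\<^sub>0 nat"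
  have c3: "mpoly_subst (\<lambda>t. \<psi> (g t)) F = (\<Sum>m\<in>A. Poly_Mapping.single (\<pi> m) (Poly_Mapping.lookup F m))"
    unfolding mpoly_subst_def A_def[symmetric]
  proof (rule sum.cong)
    fix m assume m: "m \<in> A"
    have km: "Poly_Mapping.keys m \<subseteq> {..<2^n}" using m varsF by (auto simp: A_def mpoly_vars_def)
    have "(\<Prod>t\<in>Poly_Mapping.keys m. \<psi> (g t) ^ Poly_Mapping.lookup m t) =
        (\<Prod>t\<in>Poly_Mapping.keys m. if t \<in> T then mVar (\<sigma> t) ^ Poly_Mapping.lookup m t else 1)"
      using km by (intro prod.cong) (auto simp: g_def claim1)
    also have "\<dots> = (\<Prod>t\<in>{t\<in>Poly_Mapping.keys m. t \<in> T}. mVar (\<sigma> t) ^ Poly_Mapping.lookup m t)"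
      by (simp add: prod.inter_filter)
    also have "\<dots> = Poly_Mapping.single (\<pi> m) 1"
      unfolding \<pi>_def by (rule prod_mVar_pow) simp
    finally show "mConst (Poly_Mapping.lookup F m) * (\<Prod>t\<in>Poly_Mapping.keys m. \<psi> (g t) ^ Poly_Mapping.lookup m t)
      = Poly_Mapping.single (\<pi> m) (Poly_Mapping.lookup F m)"
      by (simp add: mConst_mult_single)
  qed simp
  have c4: "Poly_Mapping.lookup (\<pi> m) j = (if j < r then Poly_Mapping.lookup m (\<tau> j) else 0)" for m j
  proof -
    have "Poly_Mapping.lookup (\<pi> m) j = (\<Sum>t\<in>{t\<in>Poly_Mapping.keys m. t \<in> T}. (Poly_Mapping.lookup m t when \<sigma> t = j))"
      by (simp add: \<pi>_def lookup_sum lookup_single)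
    also have "\<dots> = (if j < r then Poly_Mapping.lookup m (\<tau> j) else 0)"
    proof (cases "j < r")
      case True
      have "(\<Sum>t\<in>{t\<in>Poly_Mapping.keys m. t \<in> T}. (Poly_Mapping.lookup m t when \<sigma> t = j)) =
          (\<Sum>t\<in>{t\<in>Poly_Mapping.keys m. t \<in> T}. (if t = \<tau> j then Poly_Mapping.lookup m t else 0))"
        using \<sigma>1 \<sigma>2[OF True] by (intro sum.cong) (auto simp: when_def)
      also have "\<dots> = Poly_Mapping.lookup m (\<tau> j)"
        using \<sigma>2[OF True] by (simp add: sum.delta' in_keys_iff)
      finally show ?thesis using True by simp
    next
      case False
      then show ?thesis using \<sigma>1 by (intro trans[OF sum.neutral]) (auto simp: when_def)
    qed
    finally show ?thesis .
  qed
  have c5: "\<pi> m = \<pi> m0 \<longleftrightarrow> (\<forall>t\<in>T. Poly_Mapping.lookup m t = Poly_Mapping.lookup m0 t)" for m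
  proof
    assume "\<pi> m = \<pi> m0"
    then have "\<forall>j<r. Poly_Mapping.lookup m (\<tau> j) = Poly_Mapping.lookup m0 (\<tau> j)"
      using c4 by metis
    then show "\<forall>t\<in>T. Poly_Mapping.lookup m t = Poly_Mapping.lookup m0 t"
      using \<sigma>1 by metis
  next
    assume "\<forall>t\<in>T. Poly_Mapping.lookup m t = Poly_Mapping.lookup m0 t"
    then show "\<pi> m = \<pi> m0"
      by (intro poly_mapping_eqI) (simp add: c4 \<sigma>2)
  qed
  have "Poly_Mapping.lookup (\<Sum>m\<in>A. Poly_Mapping.single (\<pi> m) (Poly_Mapping.lookup F m)) (\<pi> m0) =
      (\<Sum>m\<in>A. if \<forall>t\<in>T. Poly_Mapping.lookup m t = Poly_Mapping.lookup m0 t then Poly_Mapping.lookup F m else 0)"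
    by (simp add: lookup_sum lookup_single when_def c5)
  also have "\<dots> = (\<Sum>m\<in>{m\<in>A. \<forall>t\<in>T. Poly_Mapping.lookup m t = Poly_Mapping.lookup m0 t}. Poly_Mapping.lookup F m)"
    using finA by (simp add: sum.inter_filter)
  finally have "Poly_Mapping.lookup (\<psi> (gen_compose n (G_SSSV n k) F)) (\<pi> m0) \<noteq> 0"
    using iso(5) c2 c3 by simp
  then have "\<psi> (gen_compose n (G_SSSV n k) F) \<noteq> 0" by auto
  then show ?thesis using rhom.hzero[OF R] by auto
qed



lemma subst_zero: "mpoly_subst g 0 = 0"
  by (simp add: mpoly_subst_def)

theorem corollary5p10:
  "\<exists>p :: real mpoly. \<forall>n s :: nat. n \<ge> 1 \<longrightarrow> s \<ge> 1 \<longrightarrow>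
     (let k = nat \<lceil>log 2 (real s)\<rceil> in
      succinct_generator n (k + k * n) (G_SSSV n k :: nat set \<Rightarrow> ('a::field) mpoly)
        (mpoly_eval ((\<lambda>_. 0)(0 := log 2 (real s), 1 := real n)) p)
        (sparse_class (2 ^ n) s))"
proof -
  define p :: "real mpoly" where "p = (mVar 0 + mConst 2) * (mConst 2 * mVar 1 + mConst 2)"
  show ?thesis
  proof (rule exI[of _ p], intro allI impI)
    fix n s :: nat assume n1: "n \<ge> 1" and s1: "s \<ge> 1"
    define k where "k = nat \<lceil>log 2 (real s)\<rceil>"
    have pe: "mpoly_eval ((\<lambda>_. 0)(0 := log 2 (real s), 1 := real n)) p = (log 2 (real s) + 2) * (2 * real n + 2)"
      unfolding p_def by (simp add: rhom.hmult[OF rhom_eval] rhom.hadd[OF rhom_eval])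
    have lg: "log 2 (real s) \<ge> 0" using s1 by simp
    have kb: "real k \<le> log 2 (real s) + 1"
      unfolding k_def using lg by (simp add: of_int_ceiling_le_add_one)
    have size: "real (sps_size (Phi \<alpha> n k)) \<le> (log 2 (real s) + 2) * (2 * real n + 2)" for \<alpha> :: "nat \<Rightarrow> 'a"
    proof -
      have "real (sps_size (Phi \<alpha> n k)) \<le> real ((k + 1) * (2 * n + 2))"
        using Phi_size[of \<alpha> n k] by linarith
      also have "\<dots> = (real k + 1) * (2 * real n + 2)" by (simp add: algebra_simps)
      also have "\<dots> \<le> (log 2 (real s) + 2) * (2 * real n + 2)"
        using kb by (intro mult_right_mono) auto
      finally show ?thesis .
    qed
    have "succinct_generator n (k + k * n) (G_SSSV n k :: nat set \<Rightarrow> 'a mpoly)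
        (mpoly_eval ((\<lambda>_. 0)(0 := log 2 (real s), 1 := real n)) p) (sparse_class (2 ^ n) s)"
      unfolding succinct_generator_def pe
    proof (intro conjI allI impI ballI)
      fix S :: "nat set" assume "S \<subseteq> {0..<n}"
      then show "mpoly_vars (G_SSSV n k S :: 'a mpoly) \<subseteq> {0..<k + k * n}" by (rule G_vars)
    next
      fix \<alpha> :: "nat \<Rightarrow> 'a"
      show "\<exists>\<Phi>. sps_multilinear \<Phi> \<and> real (sps_size \<Phi>) \<le> (log 2 (real s) + 2) * (2 * real n + 2) \<and>
             sps_poly \<Phi> = (\<Sum>S\<in>Pow {0..<n}. mConst (mpoly_eval \<alpha> (G_SSSV n k S)) * (\<Prod>i\<in>S. mVar i))"
        using Phi_multilinear[of \<alpha> n k] size[of \<alpha>] Phi_poly[OF n1, of \<alpha> k] by blast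
    next
      fix F :: "'a mpoly" assume F: "F \<in> sparse_class (2 ^ n) s"
      show "(F \<noteq> 0) = (gen_compose n (G_SSSV n k) F \<noteq> 0)"
      proof
        assume "F \<noteq> 0"
        then show "gen_compose n (G_SSSV n k) F \<noteq> 0" using hit[OF n1 F _ s1 k_def] by blast
      next
        assume "gen_compose n (G_SSSV n k) F \<noteq> 0"
        then show "F \<noteq> 0" by (auto simp: gen_compose_def subst_zero)
      qed
    qed
    then show "let k = nat \<lceil>log 2 (real s)\<rceil> in
      succinct_generator n (k + k * n) (G_SSSV n k :: nat set \<Rightarrow> 'a mpoly)
        (mpoly_eval ((\<lambda>_. 0)(0 := log 2 (real s), 1 := real n)) p)
        (sparse_class (2 ^ n) s)" unfolding k_def Let_def .
  qed
qed

end
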